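(* Let $\epsilon$ be real and, for $i=1,2,3$, let $\alpha_i,\beta_i,\eta_i$ be real constants with $\beta_i^2=e^{\alpha_i\epsilon}+e^{-\alpha_i\epsilon}-2$. Assume $P(p_i+p_j)\neq0$ for $i<j$ and set $A(i,j)=-\dfrac{P(p_i-p_j)}{P(p_i+p_j)}$. Then $$f(x,t)=1+\sum_{i=1}^3 e^{\theta_i}+\sum_{1\le i<j\le 3}A(i,j)e^{\theta_i+\theta_j}+A(1,2)A(1,3)A(2,3)\,e^{\theta_1+\theta_2+\theta_3},\qquad \theta_i=-\frac{\alpha_i}{x}+\beta_i t+\eta_i,$$ satisfies the bilinear generalized $q$-Toda equation $\big[D_t^2-\big(e^{\epsilon x^2D_x}+e^{-\epsilon x^2 D_x}-2\big)\big]f\cdot f=0$.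
   Context: Hirota operators: $P(D_x,D_t)\,f\cdot g := P(\partial_x-\partial_{x'},\partial_t-\partial_{t'})f(x,t)g(x',t')|_{x'=x,t'=t}$; $e^{\pm\epsilon x^2 D_x} f\cdot g$ means $f\!\left(\frac{x}{1\mp\epsilon x}\right)g\!\left(\frac{x}{1\pm\epsilon x}\right)$. For a vector $p=(\beta,\alpha,\eta)$ define $P(p)=\beta^2-\big(e^{\alpha\epsilon}+e^{-\alpha\epsilon}-2\big)$, and $p_i=(\beta_i,\alpha_i,\eta_i)$ with componentwise sums and differences. *)

theory Defs
  imports "HOL-Analysis.Analysis"
begin

type_synonym pvec = "real \<times> real \<times> real"   (* p = (beta, alpha, eta) *)

definition padd :: "pvec \<Rightarrow> pvec \<Rightarrow> pvec" where
  "padd p q = (fst p + fst q, fst (snd p) + fst (snd q), snd (snd p) + snd (snd q))"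

definition psub :: "pvec \<Rightarrow> pvec \<Rightarrow> pvec" where
  "psub p q = (fst p - fst q, fst (snd p) - fst (snd q), snd (snd p) - snd (snd q))"

definition Ppoly :: "real \<Rightarrow> pvec \<Rightarrow> real" where
  "Ppoly eps p = (fst p)^2 - (exp (fst (snd p) * eps) + exp (- (fst (snd p) * eps)) - 2)"

text \<open>Hirota D_t^2 f.g at (x,t): (d_t - d_t')^2 f(x,t) g(x,t') at t'=t, written out.\<close>
definition hirota_Dt2 :: "(real \<Rightarrow> real \<Rightarrow> real) \<Rightarrow> (real \<Rightarrow> real \<Rightarrow> real) \<Rightarrow> real \<Rightarrow> real \<Rightarrow> real" where
  "hirota_Dt2 f g x t =
     deriv (deriv (\<lambda>s. f x s)) t * g x t
     - 2 * deriv (\<lambda>s. f x s) t * deriv (\<lambda>s. g x s) t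
     + f x t * deriv (deriv (\<lambda>s. g x s)) t"

text \<open>exp(eps x^2 D_x) f.g = f(x/(1-eps x)) g(x/(1+eps x)); exp(-eps x^2 D_x) f.g = f(x/(1+eps x)) g(x/(1-eps x)).\<close>
definition qshift_plus :: "real \<Rightarrow> (real \<Rightarrow> real \<Rightarrow> real) \<Rightarrow> (real \<Rightarrow> real \<Rightarrow> real) \<Rightarrow> real \<Rightarrow> real \<Rightarrow> real" where
  "qshift_plus eps f g x t = f (x / (1 - eps * x)) t * g (x / (1 + eps * x)) t"

definition qshift_minus :: "real \<Rightarrow> (real \<Rightarrow> real \<Rightarrow> real) \<Rightarrow> (real \<Rightarrow> real \<Rightarrow> real) \<Rightarrow> real \<Rightarrow> real \<Rightarrow> real" where
  "qshift_minus eps f g x t = f (x / (1 + eps * x)) t * g (x / (1 - eps * x)) t"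

definition qToda_bilinear :: "real \<Rightarrow> (real \<Rightarrow> real \<Rightarrow> real) \<Rightarrow> real \<Rightarrow> real \<Rightarrow> real" where
  "qToda_bilinear eps f x t =
     hirota_Dt2 f f x t - (qshift_plus eps f f x t + qshift_minus eps f f x t - 2 * (f x t * f x t))"

definition pv :: "(nat \<Rightarrow> real) \<Rightarrow> (nat \<Rightarrow> real) \<Rightarrow> (nat \<Rightarrow> real) \<Rightarrow> nat \<Rightarrow> pvec" where
  "pv \<alpha> \<beta> \<eta> i = (\<beta> i, \<alpha> i, \<eta> i)"

definition Acoef :: "real \<Rightarrow> (nat \<Rightarrow> real) \<Rightarrow> (nat \<Rightarrow> real) \<Rightarrow> (nat \<Rightarrow> real) \<Rightarrow> nat \<Rightarrow> nat \<Rightarrow> real" where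
  "Acoef eps \<alpha> \<beta> \<eta> i j =
     - Ppoly eps (psub (pv \<alpha> \<beta> \<eta> i) (pv \<alpha> \<beta> \<eta> j)) / Ppoly eps (padd (pv \<alpha> \<beta> \<eta> i) (pv \<alpha> \<beta> \<eta> j))"

definition theta :: "(nat \<Rightarrow> real) \<Rightarrow> (nat \<Rightarrow> real) \<Rightarrow> (nat \<Rightarrow> real) \<Rightarrow> nat \<Rightarrow> real \<Rightarrow> real \<Rightarrow> real" where
  "theta \<alpha> \<beta> \<eta> i x t = - \<alpha> i / x + \<beta> i * t + \<eta> i"

definition three_soliton :: "real \<Rightarrow> (nat \<Rightarrow> real) \<Rightarrow> (nat \<Rightarrow> real) \<Rightarrow> (nat \<Rightarrow> real) \<Rightarrow> real \<Rightarrow> real \<Rightarrow> real" where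
  "three_soliton eps \<alpha> \<beta> \<eta> x t =
     1 + (\<Sum>i\<in>{1..3::nat}. exp (theta \<alpha> \<beta> \<eta> i x t))
       + (\<Sum>(i,j)\<in>{(i,j). 1 \<le> i \<and> i < j \<and> j \<le> (3::nat)}.
            Acoef eps \<alpha> \<beta> \<eta> i j * exp (theta \<alpha> \<beta> \<eta> i x t + theta \<alpha> \<beta> \<eta> j x t))
       + Acoef eps \<alpha> \<beta> \<eta> 1 2 * Acoef eps \<alpha> \<beta> \<eta> 1 3 * Acoef eps \<alpha> \<beta> \<eta> 2 3
           * exp (theta \<alpha> \<beta> \<eta> 1 x t + theta \<alpha> \<beta> \<eta> 2 x t + theta \<alpha> \<beta> \<eta> 3 x t)"

end

theory Submission
  imports Defs
begin
lemma s_exists: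
  fixes a b c :: real
  assumes "a > 0" "b^2 = a + c - 2" "a*c = 1"
  shows "\<exists>s. s \<noteq> 0 \<and> a = s^2 \<and> c = 1/s^2 \<and> b = s - 1/s"
proof -
  define r where "r = sqrt a"
  have r: "r > 0" "r^2 = a" using assms(1) by (auto simp: r_def)
  have c0: "c = 1/a" using assms(1,3) by (simp add: field_simps)
  have c: "c = 1/r^2" using c0 r by simp
  have rr: "(r - 1/r)^2 = r^2 + 1/r^2 - 2" using r(1) by (simp add: power2_diff power2_eq_square field_simps)
  have "b^2 = (r - 1/r)^2" unfolding rr using assms(2) unfolding c r(2)[symmetric] .
  then have "b = r - 1/r \<or> b = -(r - 1/r)" by (simp add: power2_eq_iff)
  then show ?thesis
  proof
    assume "b = r - 1/r" then show ?thesis using r c by (intro exI[of _ r]) auto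
  next
    assume "b = -(r - 1/r)" then show ?thesis using r c by (intro exI[of _ "-r"]) (auto simp: field_simps)
  qed
qed

lemma A_s:
  fixes A x y :: real
  assumes x: "x \<noteq> 0" and y: "y \<noteq> 0"
   and W: "A*(((x - 1/x)+(y - 1/y))^2 - (x^2*y^2 + 1/x^2*(1/y^2) - 2)) + (((x - 1/x)-(y - 1/y))^2 - (x^2*(1/y^2)+1/x^2*y^2-2)) = 0"
   and Q: "((x - 1/x)+(y - 1/y))^2 - (x^2*y^2 + 1/x^2*(1/y^2) - 2) \<noteq> 0"
  shows "x*y \<noteq> 1 \<and> A = (x-y)^2/(x*y-1)^2"
proof -
  have Qe: "((x - 1/x)+(y - 1/y))^2 - (x^2*y^2 + 1/x^2*(1/y^2) - 2) = -((x*y-1)^2*(x^2-1)*(y^2-1))/(x^2*y^2)"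
    using x y by (simp add: field_simps) algebra
  have Re: "((x - 1/x)-(y - 1/y))^2 - (x^2*(1/y^2)+1/x^2*y^2-2) = ((x-y)^2*(x^2-1)*(y^2-1))/(x^2*y^2)"
    using x y by (simp add: field_simps) algebra
  have nz: "(x*y-1)*(x^2-1)*(y^2-1) \<noteq> 0" using Q Qe by auto
  have W': "A*(-((x*y-1)^2*(x^2-1)*(y^2-1))/(x^2*y^2)) + ((x-y)^2*(x^2-1)*(y^2-1))/(x^2*y^2) = 0"
    using W unfolding Qe Re .
  have "A*(-((x*y-1)^2*(x^2-1)*(y^2-1))/(x^2*y^2)) + ((x-y)^2*(x^2-1)*(y^2-1))/(x^2*y^2)
     = (A*(-((x*y-1)^2*(x^2-1)*(y^2-1))) + (x-y)^2*(x^2-1)*(y^2-1))/(x^2*y^2)"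
    by (simp add: add_divide_distrib diff_divide_distrib)
  with W' x y have "A*(-((x*y-1)^2*(x^2-1)*(y^2-1))) + (x-y)^2*(x^2-1)*(y^2-1) = 0" by simp
  then have "(x^2-1)*(y^2-1)*(A*(x*y-1)^2 - (x-y)^2) = 0" by algebra
  then have "A*(x*y-1)^2 = (x-y)^2" using nz by auto
  moreover have "x*y-1 \<noteq> 0" using nz by auto
  ultimately show ?thesis by (auto simp: field_simps)
qed

lemma C_s:
  fixes x y z :: real
  assumes x: "x \<noteq> 0" and y: "y \<noteq> 0" and z: "z \<noteq> 0"
   and xy: "x*y \<noteq> 1" and xz: "x*z \<noteq> 1" and yz: "y*z \<noteq> 1"
  shows "((x-y)^2/(x*y-1)^2)*((x-z)^2/(x*z-1)^2)*((y-z)^2/(y*z-1)^2)*(((x - 1/x)+(y - 1/y)+(z - 1/z))^2 - (x^2*y^2*z^2 + 1/x^2*(1/y^2)*(1/z^2) - 2))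
   + ((x-y)^2/(x*y-1)^2)*(((x - 1/x)+(y - 1/y)-(z - 1/z))^2 - (x^2*y^2*(1/z^2) + 1/x^2*(1/y^2)*z^2 - 2))
   + ((x-z)^2/(x*z-1)^2)*(((x - 1/x)+(z - 1/z)-(y - 1/y))^2 - (x^2*z^2*(1/y^2) + 1/x^2*(1/z^2)*y^2 - 2))
   + ((y-z)^2/(y*z-1)^2)*(((y - 1/y)+(z - 1/z)-(x - 1/x))^2 - (y^2*z^2*(1/x^2) + 1/y^2*(1/z^2)*x^2 - 2)) = 0"
proof -
  have d: "x^2*y^2*z^2 \<noteq> 0" "x*y-1 \<noteq> 0" "x*z-1\<noteq>0" "y*z-1\<noteq>0" using x y z xy xz yz by auto
  have P1: "((x - 1/x)+(y - 1/y)+(z - 1/z))^2 - (x^2*y^2*z^2 + 1/x^2*(1/y^2)*(1/z^2) - 2)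
     = (((x^2-1)*y*z + (y^2-1)*x*z + (z^2-1)*x*y)^2 - (x^2*y^2*z^2-1)^2)/(x^2*y^2*z^2)"
    using x y z by (simp add: field_simps) algebra
  have P2: "((x - 1/x)+(y - 1/y)-(z - 1/z))^2 - (x^2*y^2*(1/z^2) + 1/x^2*(1/y^2)*z^2 - 2)
     = (((x^2-1)*y*z + (y^2-1)*x*z - (z^2-1)*x*y)^2 - (x^2*y^2-z^2)^2)/(x^2*y^2*z^2)"
    using x y z by (simp add: field_simps) algebra
  have P3: "((x - 1/x)+(z - 1/z)-(y - 1/y))^2 - (x^2*z^2*(1/y^2) + 1/x^2*(1/z^2)*y^2 - 2)
     = (((x^2-1)*y*z - (y^2-1)*x*z + (z^2-1)*x*y)^2 - (x^2*z^2-y^2)^2)/(x^2*y^2*z^2)"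
    using x y z by (simp add: field_simps) algebra
  have P4: "((y - 1/y)+(z - 1/z)-(x - 1/x))^2 - (y^2*z^2*(1/x^2) + 1/y^2*(1/z^2)*x^2 - 2)
     = ((-(x^2-1)*y*z + (y^2-1)*x*z + (z^2-1)*x*y)^2 - (y^2*z^2-x^2)^2)/(x^2*y^2*z^2)"
    using x y z by (simp add: field_simps) algebra
  have poly: "(x-y)^2*(x-z)^2*(y-z)^2*(((x^2-1)*y*z + (y^2-1)*x*z + (z^2-1)*x*y)^2 - (x^2*y^2*z^2-1)^2)
 + (x-y)^2*(x*z-1)^2*(y*z-1)^2*(((x^2-1)*y*z + (y^2-1)*x*z - (z^2-1)*x*y)^2 - (x^2*y^2-z^2)^2)
 + (x-z)^2*(x*y-1)^2*(y*z-1)^2*(((x^2-1)*y*z - (y^2-1)*x*z + (z^2-1)*x*y)^2 - (x^2*z^2-y^2)^2)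
 + (y-z)^2*(x*y-1)^2*(x*z-1)^2*((-(x^2-1)*y*z + (y^2-1)*x*z + (z^2-1)*x*y)^2 - (y^2*z^2-x^2)^2) = (0::real)"
    by algebra
  have comb: "\<And>u1 u2 u3 d1 d2 d3 m p1 p2 p3 p4::real. d1 \<noteq> 0 \<Longrightarrow> d2 \<noteq> 0 \<Longrightarrow> d3 \<noteq> 0 \<Longrightarrow> m \<noteq> 0 \<Longrightarrow>
     (u1/d1)*(u2/d2)*(u3/d3)*(p1/m) + (u1/d1)*(p2/m) + (u2/d2)*(p3/m) + (u3/d3)*(p4/m)
     = (u1*u2*u3*p1 + u1*d2*d3*p2 + u2*d1*d3*p3 + u3*d1*d2*p4)/(d1*d2*d3*m)"
    by (simp add: field_simps)
  have pz: "(x-y)^2*(x-z)^2*(y-z)^2*(((x^2-1)*y*z + (y^2-1)*x*z + (z^2-1)*x*y)^2 - (x^2*y^2*z^2-1)^2)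
 + (x-y)^2*((x*z-1)^2)*((y*z-1)^2)*(((x^2-1)*y*z + (y^2-1)*x*z - (z^2-1)*x*y)^2 - (x^2*y^2-z^2)^2)
 + (x-z)^2*((x*y-1)^2)*((y*z-1)^2)*(((x^2-1)*y*z - (y^2-1)*x*z + (z^2-1)*x*y)^2 - (x^2*z^2-y^2)^2)
 + (y-z)^2*((x*y-1)^2)*((x*z-1)^2)*((-(x^2-1)*y*z + (y^2-1)*x*z + (z^2-1)*x*y)^2 - (y^2*z^2-x^2)^2) = 0"
    using poly by simp
  show ?thesis unfolding P1 P2 P3 P4 apply (subst comb) using d apply simp_all by (insert pz) simp
qed

lemma C_abs:
  fixes a1 a2 a3 b1 b2 b3 c1 c2 c3 A12 A13 A23 :: real
  assumes pa1: "a1 > 0" and pa2: "a2 > 0" and pa3: "a3 > 0"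
    and H1: "b1^2 = a1 + c1 - 2" and H2: "b2^2 = a2 + c2 - 2" and H3: "b3^2 = a3 + c3 - 2"
    and U1: "a1*c1 = 1" and U2: "a2*c2 = 1" and U3: "a3*c3 = 1"
    and W12: "A12*((b1+b2)^2 - (a1*a2 + c1*c2 - 2)) + ((b1-b2)^2 - (a1*c2+c1*a2-2)) = 0"
    and W13: "A13*((b1+b3)^2 - (a1*a3 + c1*c3 - 2)) + ((b1-b3)^2 - (a1*c3+c1*a3-2)) = 0"
    and W23: "A23*((b2+b3)^2 - (a2*a3 + c2*c3 - 2)) + ((b2-b3)^2 - (a2*c3+c2*a3-2)) = 0"
    and Q12: "(b1+b2)^2 - (a1*a2 + c1*c2 - 2) \<noteq> 0"
    and Q13: "(b1+b3)^2 - (a1*a3 + c1*c3 - 2) \<noteq> 0"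
    and Q23: "(b2+b3)^2 - (a2*a3 + c2*c3 - 2) \<noteq> 0"
  shows "A12*A13*A23*((b1+b2+b3)^2 - (a1*a2*a3 + c1*c2*c3 - 2)) + A12*((b1+b2-b3)^2 - (a1*a2*c3 + c1*c2*a3 - 2)) + A13*((b1+b3-b2)^2 - (a1*a3*c2 + c1*c3*a2 - 2)) + A23*((b2+b3-b1)^2 - (a2*a3*c1 + c2*c3*a1 - 2)) = 0"

proof -
  obtain x where x: "x \<noteq> 0" "a1 = x^2" "c1 = 1/x^2" "b1 = x - 1/x" using s_exists[OF pa1 H1 U1] by blast
  obtain y where y: "y \<noteq> 0" "a2 = y^2" "c2 = 1/y^2" "b2 = y - 1/y" using s_exists[OF pa2 H2 U2] by blast
  obtain z where z: "z \<noteq> 0" "a3 = z^2" "c3 = 1/z^2" "b3 = z - 1/z" using s_exists[OF pa3 H3 U3] by blast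
  have h12: "x*y \<noteq> 1 \<and> A12 = (x-y)^2/(x*y-1)^2"
    using W12 Q12 unfolding x(2-4) y(2-4) by (rule A_s[OF x(1) y(1)])
  have h13: "x*z \<noteq> 1 \<and> A13 = (x-z)^2/(x*z-1)^2"
    using W13 Q13 unfolding x(2-4) z(2-4) by (rule A_s[OF x(1) z(1)])
  have h23: "y*z \<noteq> 1 \<and> A23 = (y-z)^2/(y*z-1)^2"
    using W23 Q23 unfolding y(2-4) z(2-4) by (rule A_s[OF y(1) z(1)])
  show ?thesis unfolding x(2-4) y(2-4) z(2-4) h12[THEN conjunct2] h13[THEN conjunct2] h23[THEN conjunct2]
    by (rule C_s[OF x(1) y(1) z(1) h12[THEN conjunct1] h13[THEN conjunct1] h23[THEN conjunct1]])
qed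

definition TS :: "real \<Rightarrow> real \<Rightarrow> real \<Rightarrow> real \<Rightarrow> real \<Rightarrow> real \<Rightarrow> real" where
  "TS A12 A13 A23 e1 e2 e3 = 1 + e1 + e2 + e3 + A12*e1*e2 + A13*e1*e3 + A23*e2*e3 + A12*A13*A23*e1*e2*e3"
definition TS1 :: "real \<Rightarrow> real \<Rightarrow> real \<Rightarrow> real \<Rightarrow> real \<Rightarrow> real \<Rightarrow> real \<Rightarrow> real \<Rightarrow> real \<Rightarrow> real" where
  "TS1 b1 b2 b3 A12 A13 A23 e1 e2 e3 = b1*e1 + b2*e2 + b3*e3 + A12*(b1+b2)*e1*e2 + A13*(b1+b3)*e1*e3 + A23*(b2+b3)*e2*e3 + A12*A13*A23*(b1+b2+b3)*e1*e2*e3"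
definition TS2 :: "real \<Rightarrow> real \<Rightarrow> real \<Rightarrow> real \<Rightarrow> real \<Rightarrow> real \<Rightarrow> real \<Rightarrow> real \<Rightarrow> real \<Rightarrow> real" where
  "TS2 b1 b2 b3 A12 A13 A23 e1 e2 e3 = b1^2*e1 + b2^2*e2 + b3^2*e3 + A12*(b1+b2)^2*e1*e2 + A13*(b1+b3)^2*e1*e3 + A23*(b2+b3)^2*e2*e3 + A12*A13*A23*(b1+b2+b3)^2*e1*e2*e3"
lemma bil_expand:
  fixes e1 e2 e3 a1 a2 a3 b1 b2 b3 c1 c2 c3 A12 A13 A23 :: real
  shows "(b1^2*e1 + b2^2*e2 + b3^2*e3 + A12*(b1+b2)^2*e1*e2 + A13*(b1+b3)^2*e1*e3 + A23*(b2+b3)^2*e2*e3 + A12*A13*A23*(b1+b2+b3)^2*e1*e2*e3)*(1 + e1 + e2 + e3 + A12*e1*e2 + A13*e1*e3 + A23*e2*e3 + A12*A13*A23*e1*e2*e3) - 2*(b1*e1 + b2*e2 + b3*e3 + A12*(b1+b2)*e1*e2 + A13*(b1+b3)*e1*e3 + A23*(b2+b3)*e2*e3 + A12*A13*A23*(b1+b2+b3)*e1*e2*e3)*(b1*e1 + b2*e2 + b3*e3 + A12*(b1+b2)*e1*e2 + A13*(b1+b3)*e1*e3 + A23*(b2+b3)*e2*e3 + A12*A13*A23*(b1+b2+b3)*e1*e2*e3) + (1 + e1 + e2 + e3 + A12*e1*e2 + A13*e1*e3 + A23*e2*e3 + A12*A13*A23*e1*e2*e3)*(b1^2*e1 + b2^2*e2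 + b3^2*e3 + A12*(b1+b2)^2*e1*e2 + A13*(b1+b3)^2*e1*e3 + A23*(b2+b3)^2*e2*e3 + A12*A13*A23*(b1+b2+b3)^2*e1*e2*e3) - ((1 + e1*a1 + e2*a2 + e3*a3 + A12*(e1*a1)*(e2*a2) + A13*(e1*a1)*(e3*a3) + A23*(e2*a2)*(e3*a3) + A12*A13*A23*(e1*a1)*(e2*a2)*(e3*a3))*(1 + e1*c1 + e2*c2 + e3*c3 + A12*(e1*c1)*(e2*c2) + A13*(e1*c1)*(e3*c3) + A23*(e2*c2)*(e3*c3) + A12*A13*A23*(e1*c1)*(e2*c2)*(e3*c3)) + (1 + e1*c1 + e2*c2 + e3*c3 + A12*(e1*c1)*(e2*c2) + A13*(e1*c1)*(e3*c3) + A23*(e2*c2)*(e3*c3) + A12*A13*A23*(e1*c1)*(e2*c2)*(e3*c3))*(1 + e1*a1 + e2*a2 + e3*a3 + A12*(e1*a1)*(e2*a2) + A13*(e1*a1)*(e3*a3) + A23*(e2*a2)*(e3*a3) + A12*A13*A23*(e1*a1)*(e2*a2)*(e3*a3)) - 2*((1 + e1 + e2 + e3 + A12*e1*e2 + A13*e1*e3 + A23*e2*e3 + A12*A13*A23*e1*e2*e3)*(1 + e1 + e2 + e3 + A12*e1*e2 + A13*e1*e3 + A23*e2*e3 + A12*A13*A23*e1*e2*e3))) = e3*(((- b3)^2 - (c3 + a3 - 2)) + ((b3)^2 - (a3 + c3 - 2))) + e3*e3*((- (a3*c3 + a3*c3 - 2))) + e2*(((- b2)^2 - (c2 + a2 -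 2)) + ((b2)^2 - (a2 + c2 - 2))) + e2*e3*(A23*((- b2 - b3)^2 - (c2*c3 + a2*a3 - 2)) + ((b2 - b3)^2 - (a2*c3 + a3*c2 - 2)) + ((b3 - b2)^2 - (a3*c2 + a2*c3 - 2)) + A23*((b2 + b3)^2 - (a2*a3 + c2*c3 - 2))) + e2*e3*e3*(A23*((- b2)^2 - (a3*c2*c3 + a2*a3*c3 - 2)) + A23*((b2)^2 - (a2*a3*c3 + a3*c2*c3 - 2))) + e2*e2*((- (a2*c2 + a2*c2 - 2))) + e2*e2*e3*(A23*((- b3)^2 - (a2*c2*c3 + a2*a3*c2 - 2)) + A23*((b3)^2 - (a2*a3*c2 + a2*c2*c3 - 2))) + e2*e2*e3*e3*(A23*A23*(- (a2*a3*c2*c3 + a2*a3*c2*c3 - 2))) + e1*(((- b1)^2 - (c1 + a1 - 2)) + ((b1)^2 - (a1 + c1 - 2))) + e1*e3*(A13*((- b1 - b3)^2 - (c1*c3 + a1*a3 - 2)) + ((b1 - b3)^2 - (a1*c3 + a3*c1 - 2)) + ((b3 - b1)^2 - (a3*c1 + a1*c3 - 2)) + A13*((b1 + b3)^2 - (a1*a3 + c1*c3 - 2))) + e1*e3*e3*(A13*((- b1)^2 - (a3*c1*c3 + a1*a3*c3 - 2)) + A13*((b1)^2 - (a1*a3*c3 + a3*c1*c3 - 2))) + e1*e2*(A12*((- b1 - b2)^2 - (c1*c2 + a1*a2 - 2)) + ((b1 - b2)^2 - (a1*c2 + a2*c1 - 2)) + ((b2 - b1)^2 - (a2*c1 + a1*c2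 - 2)) + A12*((b1 + b2)^2 - (a1*a2 + c1*c2 - 2))) + e1*e2*e3*(A12*A13*A23*((- b1 - b2 - b3)^2 - (c1*c2*c3 + a1*a2*a3 - 2)) + A23*((b1 - b2 - b3)^2 - (a1*c2*c3 + a2*a3*c1 - 2)) + A13*((b2 - b1 - b3)^2 - (a2*c1*c3 + a1*a3*c2 - 2)) + A12*((b3 - b1 - b2)^2 - (a3*c1*c2 + a1*a2*c3 - 2)) + A12*((b1 + b2 - b3)^2 - (a1*a2*c3 + a3*c1*c2 - 2)) + A13*((b1 + b3 - b2)^2 - (a1*a3*c2 + a2*c1*c3 - 2)) + A23*((b2 + b3 - b1)^2 - (a2*a3*c1 + a1*c2*c3 - 2)) + A12*A13*A23*((b1 + b2 + b3)^2 - (a1*a2*a3 + c1*c2*c3 - 2))) + e1*e2*e3*e3*(A12*A13*A23*((- b1 - b2)^2 - (a3*c1*c2*c3 + a1*a2*a3*c3 - 2)) + A13*A23*((b1 - b2)^2 - (a1*a3*c2*c3 + a2*a3*c1*c3 - 2)) + A23*A13*((b2 - b1)^2 - (a2*a3*c1*c3 + a1*a3*c2*c3 - 2)) + A12*A13*A23*((b1 + b2)^2 - (a1*a2*a3*c3 + a3*c1*c2*c3 - 2))) + e1*e2*e2*(A12*((- b1)^2 - (a2*c1*c2 + a1*a2*c2 - 2)) + A12*((b1)^2 - (a1*a2*c2 + a2*c1*c2 - 2))) + e1*e2*e2*e3*(A12*A13*A23*((- b1 - b3)^2 - (a2*c1*c2*c3 + a1*a2*a3*c2 - 2)) + A12*A23*((b1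 - b3)^2 - (a1*a2*c2*c3 + a2*a3*c1*c2 - 2)) + A23*A12*((b3 - b1)^2 - (a2*a3*c1*c2 + a1*a2*c2*c3 - 2)) + A12*A13*A23*((b1 + b3)^2 - (a1*a2*a3*c2 + a2*c1*c2*c3 - 2))) + e1*e2*e2*e3*e3*(A23*A12*A13*A23*((- b1)^2 - (a2*a3*c1*c2*c3 + a1*a2*a3*c2*c3 - 2)) + A12*A13*A23*A23*((b1)^2 - (a1*a2*a3*c2*c3 + a2*a3*c1*c2*c3 - 2))) + e1*e1*((- (a1*c1 + a1*c1 - 2))) + e1*e1*e3*(A13*((- b3)^2 - (a1*c1*c3 + a1*a3*c1 - 2)) + A13*((b3)^2 - (a1*a3*c1 + a1*c1*c3 - 2))) + e1*e1*e3*e3*(A13*A13*(- (a1*a3*c1*c3 + a1*a3*c1*c3 - 2))) + e1*e1*e2*(A12*((- b2)^2 - (a1*c1*c2 + a1*a2*c1 - 2)) + A12*((b2)^2 - (a1*a2*c1 + a1*c1*c2 - 2))) + e1*e1*e2*e3*(A12*A13*A23*((- b2 - b3)^2 - (a1*c1*c2*c3 + a1*a2*a3*c1 - 2)) + A12*A13*((b2 - b3)^2 - (a1*a2*c1*c3 + a1*a3*c1*c2 - 2)) + A13*A12*((b3 - b2)^2 - (a1*a3*c1*c2 + a1*a2*c1*c3 - 2)) + A12*A13*A23*((b2 + b3)^2 - (a1*a2*a3*c1 + a1*c1*c2*c3 - 2))) + e1*e1*e2*e3*e3*(A13*A12*A13*A23*((- b2)^2 - (a1*a3*c1*c2*c3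 + a1*a2*a3*c1*c3 - 2)) + A12*A13*A23*A13*((b2)^2 - (a1*a2*a3*c1*c3 + a1*a3*c1*c2*c3 - 2))) + e1*e1*e2*e2*(A12*A12*(- (a1*a2*c1*c2 + a1*a2*c1*c2 - 2))) + e1*e1*e2*e2*e3*(A12*A12*A13*A23*((- b3)^2 - (a1*a2*c1*c2*c3 + a1*a2*a3*c1*c2 - 2)) + A12*A13*A23*A12*((b3)^2 - (a1*a2*a3*c1*c2 + a1*a2*c1*c2*c3 - 2))) + e1*e1*e2*e2*e3*e3*(A12*A13*A23*A12*A13*A23*(- (a1*a2*a3*c1*c2*c3 + a1*a2*a3*c1*c2*c3 - 2)))"
  by algebra

lemma bil_zero:
  fixes e1 e2 e3 a1 a2 a3 b1 b2 b3 c1 c2 c3 A12 A13 A23 :: real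
  assumes H1: "b1^2 = a1 + c1 - 2" and H2: "b2^2 = a2 + c2 - 2" and H3: "b3^2 = a3 + c3 - 2"
    and U1: "a1*c1 = 1" and U2: "a2*c2 = 1" and U3: "a3*c3 = 1"
    and W12: "A12*((b1+b2)^2 - (a1*a2 + c1*c2 - 2)) + ((b1-b2)^2 - (a1*c2+c1*a2-2)) = 0"
    and W13: "A13*((b1+b3)^2 - (a1*a3 + c1*c3 - 2)) + ((b1-b3)^2 - (a1*c3+c1*a3-2)) = 0"
    and W23: "A23*((b2+b3)^2 - (a2*a3 + c2*c3 - 2)) + ((b2-b3)^2 - (a2*c3+c2*a3-2)) = 0"
    and C: "A12*A13*A23*((b1+b2+b3)^2 - (a1*a2*a3 + c1*c2*c3 - 2)) + A12*((b1+b2-b3)^2 - (a1*a2*c3 + c1*c2*a3 - 2)) + A13*((b1+b3-b2)^2 - (a1*a3*c2 + c1*c3*a2 - 2)) + A23*((b2+b3-b1)^2 - (a2*a3*c1 + c2*c3*a1 - 2)) = 0"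
  shows "(b1^2*e1 + b2^2*e2 + b3^2*e3 + A12*(b1+b2)^2*e1*e2 + A13*(b1+b3)^2*e1*e3 + A23*(b2+b3)^2*e2*e3 + A12*A13*A23*(b1+b2+b3)^2*e1*e2*e3)*(1 + e1 + e2 + e3 + A12*e1*e2 + A13*e1*e3 + A23*e2*e3 + A12*A13*A23*e1*e2*e3) - 2*(b1*e1 + b2*e2 + b3*e3 + A12*(b1+b2)*e1*e2 + A13*(b1+b3)*e1*e3 + A23*(b2+b3)*e2*e3 + A12*A13*A23*(b1+b2+b3)*e1*e2*e3)*(b1*e1 + b2*e2 + b3*e3 + A12*(b1+b2)*e1*e2 + A13*(b1+b3)*e1*e3 + A23*(b2+b3)*e2*e3 + A12*A13*A23*(b1+b2+b3)*e1*e2*e3) + (1 + e1 + e2 + e3 + A12*e1*e2 + A13*e1*e3 + A23*e2*e3 + A12*A13*A23*e1*e2*e3)*(b1^2*e1 + b2^2*e2 + b3^2*e3 + A12*(b1+b2)^2*e1*e2 + A13*(b1+b3)^2*e1*e3 + A23*(b2+b3)^2*e2*e3 + A12*A13*A23*(b1+b2+b3)^2*e1*e2*e3) - ((1 + e1*a1 + e2*a2 + e3*a3 + A12*(e1*a1)*(e2*a2) + A13*(e1*a1)*(e3*a3) + A23*(e2*a2)*(e3*a3) + A12*A13*A23*(e1*a1)*(e2*a2)*(e3*a3))*(1 + e1*c1 + e2*c2 + e3*c3 + A12*(e1*c1)*(e2*c2) + A13*(e1*c1)*(e3*c3) + A23*(e2*c2)*(e3*c3) + A12*A13*A23*(e1*c1)*(e2*c2)*(e3*c3))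 + (1 + e1*c1 + e2*c2 + e3*c3 + A12*(e1*c1)*(e2*c2) + A13*(e1*c1)*(e3*c3) + A23*(e2*c2)*(e3*c3) + A12*A13*A23*(e1*c1)*(e2*c2)*(e3*c3))*(1 + e1*a1 + e2*a2 + e3*a3 + A12*(e1*a1)*(e2*a2) + A13*(e1*a1)*(e3*a3) + A23*(e2*a2)*(e3*a3) + A12*A13*A23*(e1*a1)*(e2*a2)*(e3*a3)) - 2*((1 + e1 + e2 + e3 + A12*e1*e2 + A13*e1*e3 + A23*e2*e3 + A12*A13*A23*e1*e2*e3)*(1 + e1 + e2 + e3 + A12*e1*e2 + A13*e1*e3 + A23*e2*e3 + A12*A13*A23*e1*e2*e3))) = 0"
proof -

  have k0: "(((- b3)^2 - (c3 + a3 - 2)) + ((b3)^2 - (a3 + c3 - 2))) = 0" using H1 H2 H3 U1 U2 U3 W12 W13 W23 C by algebra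

  have k1: "((- (a3*c3 + a3*c3 - 2))) = 0" using H1 H2 H3 U1 U2 U3 W12 W13 W23 C by algebra

  have k2: "(((- b2)^2 - (c2 + a2 - 2)) + ((b2)^2 - (a2 + c2 - 2))) = 0" using H1 H2 H3 U1 U2 U3 W12 W13 W23 C by algebra

  have k3: "(A23*((- b2 - b3)^2 - (c2*c3 + a2*a3 - 2)) + ((b2 - b3)^2 - (a2*c3 + a3*c2 - 2)) + ((b3 - b2)^2 - (a3*c2 + a2*c3 - 2)) + A23*((b2 + b3)^2 - (a2*a3 + c2*c3 - 2))) = 0" using H1 H2 H3 U1 U2 U3 W12 W13 W23 C by algebra

  have k4: "(A23*((- b2)^2 - (a3*c2*c3 + a2*a3*c3 - 2)) + A23*((b2)^2 - (a2*a3*c3 + a3*c2*c3 - 2))) = 0" using H1 H2 H3 U1 U2 U3 W12 W13 W23 C by algebra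

  have k5: "((- (a2*c2 + a2*c2 - 2))) = 0" using H1 H2 H3 U1 U2 U3 W12 W13 W23 C by algebra

  have k6: "(A23*((- b3)^2 - (a2*c2*c3 + a2*a3*c2 - 2)) + A23*((b3)^2 - (a2*a3*c2 + a2*c2*c3 - 2))) = 0" using H1 H2 H3 U1 U2 U3 W12 W13 W23 C by algebra

  have k7: "(A23*A23*(- (a2*a3*c2*c3 + a2*a3*c2*c3 - 2))) = 0" using H1 H2 H3 U1 U2 U3 W12 W13 W23 C by algebra

  have k8: "(((- b1)^2 - (c1 + a1 - 2)) + ((b1)^2 - (a1 + c1 - 2))) = 0" using H1 H2 H3 U1 U2 U3 W12 W13 W23 C by algebra

  have k9: "(A13*((- b1 - b3)^2 - (c1*c3 + a1*a3 - 2)) + ((b1 - b3)^2 - (a1*c3 + a3*c1 - 2)) + ((b3 - b1)^2 - (a3*c1 + a1*c3 - 2)) + A13*((b1 + b3)^2 - (a1*a3 + c1*c3 - 2))) = 0" using H1 H2 H3 U1 U2 U3 W12 W13 W23 C by algebra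

  have k10: "(A13*((- b1)^2 - (a3*c1*c3 + a1*a3*c3 - 2)) + A13*((b1)^2 - (a1*a3*c3 + a3*c1*c3 - 2))) = 0" using H1 H2 H3 U1 U2 U3 W12 W13 W23 C by algebra

  have k11: "(A12*((- b1 - b2)^2 - (c1*c2 + a1*a2 - 2)) + ((b1 - b2)^2 - (a1*c2 + a2*c1 - 2)) + ((b2 - b1)^2 - (a2*c1 + a1*c2 - 2)) + A12*((b1 + b2)^2 - (a1*a2 + c1*c2 - 2))) = 0" using H1 H2 H3 U1 U2 U3 W12 W13 W23 C by algebra

  have k12: "(A12*A13*A23*((- b1 - b2 - b3)^2 - (c1*c2*c3 + a1*a2*a3 - 2)) + A23*((b1 - b2 - b3)^2 - (a1*c2*c3 + a2*a3*c1 - 2)) + A13*((b2 - b1 - b3)^2 - (a2*c1*c3 + a1*a3*c2 - 2)) + A12*((b3 - b1 - b2)^2 - (a3*c1*c2 + a1*a2*c3 - 2)) + A12*((b1 + b2 - b3)^2 - (a1*a2*c3 + a3*c1*c2 - 2)) + A13*((b1 + b3 - b2)^2 - (a1*a3*c2 + a2*c1*c3 - 2)) + A23*((b2 + b3 - b1)^2 - (a2*a3*c1 + a1*c2*c3 - 2)) + A12*A13*A23*((b1 + b2 + b3)^2 - (a1*a2*a3 + c1*c2*c3 - 2))) = 0" using H1 H2 H3 U1 U2 U3 W12 W13 W23 C by algebra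

  have k13: "(A12*A13*A23*((- b1 - b2)^2 - (a3*c1*c2*c3 + a1*a2*a3*c3 - 2)) + A13*A23*((b1 - b2)^2 - (a1*a3*c2*c3 + a2*a3*c1*c3 - 2)) + A23*A13*((b2 - b1)^2 - (a2*a3*c1*c3 + a1*a3*c2*c3 - 2)) + A12*A13*A23*((b1 + b2)^2 - (a1*a2*a3*c3 + a3*c1*c2*c3 - 2))) = 0" using H1 H2 H3 U1 U2 U3 W12 W13 W23 C by algebra

  have k14: "(A12*((- b1)^2 - (a2*c1*c2 + a1*a2*c2 - 2)) + A12*((b1)^2 - (a1*a2*c2 + a2*c1*c2 - 2))) = 0" using H1 H2 H3 U1 U2 U3 W12 W13 W23 C by algebra

  have k15: "(A12*A13*A23*((- b1 - b3)^2 - (a2*c1*c2*c3 + a1*a2*a3*c2 - 2)) + A12*A23*((b1 - b3)^2 - (a1*a2*c2*c3 + a2*a3*c1*c2 - 2)) + A23*A12*((b3 - b1)^2 - (a2*a3*c1*c2 + a1*a2*c2*c3 - 2)) + A12*A13*A23*((b1 + b3)^2 - (a1*a2*a3*c2 + a2*c1*c2*c3 - 2))) = 0" using H1 H2 H3 U1 U2 U3 W12 W13 W23 C by algebra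

  have k16: "(A23*A12*A13*A23*((- b1)^2 - (a2*a3*c1*c2*c3 + a1*a2*a3*c2*c3 - 2)) + A12*A13*A23*A23*((b1)^2 - (a1*a2*a3*c2*c3 + a2*a3*c1*c2*c3 - 2))) = 0" using H1 H2 H3 U1 U2 U3 W12 W13 W23 C by algebra

  have k17: "((- (a1*c1 + a1*c1 - 2))) = 0" using H1 H2 H3 U1 U2 U3 W12 W13 W23 C by algebra

  have k18: "(A13*((- b3)^2 - (a1*c1*c3 + a1*a3*c1 - 2)) + A13*((b3)^2 - (a1*a3*c1 + a1*c1*c3 - 2))) = 0" using H1 H2 H3 U1 U2 U3 W12 W13 W23 C by algebra

  have k19: "(A13*A13*(- (a1*a3*c1*c3 + a1*a3*c1*c3 - 2))) = 0" using H1 H2 H3 U1 U2 U3 W12 W13 W23 C by algebra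

  have k20: "(A12*((- b2)^2 - (a1*c1*c2 + a1*a2*c1 - 2)) + A12*((b2)^2 - (a1*a2*c1 + a1*c1*c2 - 2))) = 0" using H1 H2 H3 U1 U2 U3 W12 W13 W23 C by algebra

  have k21: "(A12*A13*A23*((- b2 - b3)^2 - (a1*c1*c2*c3 + a1*a2*a3*c1 - 2)) + A12*A13*((b2 - b3)^2 - (a1*a2*c1*c3 + a1*a3*c1*c2 - 2)) + A13*A12*((b3 - b2)^2 - (a1*a3*c1*c2 + a1*a2*c1*c3 - 2)) + A12*A13*A23*((b2 + b3)^2 - (a1*a2*a3*c1 + a1*c1*c2*c3 - 2))) = 0" using H1 H2 H3 U1 U2 U3 W12 W13 W23 C by algebra

  have k22: "(A13*A12*A13*A23*((- b2)^2 - (a1*a3*c1*c2*c3 + a1*a2*a3*c1*c3 - 2)) + A12*A13*A23*A13*((b2)^2 - (a1*a2*a3*c1*c3 + a1*a3*c1*c2*c3 - 2))) = 0" using H1 H2 H3 U1 U2 U3 W12 W13 W23 C by algebra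

  have k23: "(A12*A12*(- (a1*a2*c1*c2 + a1*a2*c1*c2 - 2))) = 0" using H1 H2 H3 U1 U2 U3 W12 W13 W23 C by algebra

  have k24: "(A12*A12*A13*A23*((- b3)^2 - (a1*a2*c1*c2*c3 + a1*a2*a3*c1*c2 - 2)) + A12*A13*A23*A12*((b3)^2 - (a1*a2*a3*c1*c2 + a1*a2*c1*c2*c3 - 2))) = 0" using H1 H2 H3 U1 U2 U3 W12 W13 W23 C by algebra

  have k25: "(A12*A13*A23*A12*A13*A23*(- (a1*a2*a3*c1*c2*c3 + a1*a2*a3*c1*c2*c3 - 2))) = 0" using H1 H2 H3 U1 U2 U3 W12 W13 W23 C by algebra

  show ?thesis unfolding bil_expand by (simp only: k0 k1 k2 k3 k4 k5 k6 k7 k8 k9 k10 k11 k12 k13 k14 k15 k16 k17 k18 k19 k20 k21 k22 k23 k24 k25)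
qed

lemma bil_TS:
  fixes e1 e2 e3 a1 a2 a3 b1 b2 b3 c1 c2 c3 A12 A13 A23 :: real
  assumes H1: "b1^2 = a1 + c1 - 2" and H2: "b2^2 = a2 + c2 - 2" and H3: "b3^2 = a3 + c3 - 2"
    and U1: "a1*c1 = 1" and U2: "a2*c2 = 1" and U3: "a3*c3 = 1"
    and W12: "A12*((b1+b2)^2 - (a1*a2 + c1*c2 - 2)) + ((b1-b2)^2 - (a1*c2+c1*a2-2)) = 0"
    and W13: "A13*((b1+b3)^2 - (a1*a3 + c1*c3 - 2)) + ((b1-b3)^2 - (a1*c3+c1*a3-2)) = 0"
    and W23: "A23*((b2+b3)^2 - (a2*a3 + c2*c3 - 2)) + ((b2-b3)^2 - (a2*c3+c2*a3-2)) = 0"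
    and C: "A12*A13*A23*((b1+b2+b3)^2 - (a1*a2*a3 + c1*c2*c3 - 2)) + A12*((b1+b2-b3)^2 - (a1*a2*c3 + c1*c2*a3 - 2)) + A13*((b1+b3-b2)^2 - (a1*a3*c2 + c1*c3*a2 - 2)) + A23*((b2+b3-b1)^2 - (a2*a3*c1 + c2*c3*a1 - 2)) = 0"
  shows "TS2 b1 b2 b3 A12 A13 A23 e1 e2 e3 * TS A12 A13 A23 e1 e2 e3 - 2 * TS1 b1 b2 b3 A12 A13 A23 e1 e2 e3 * TS1 b1 b2 b3 A12 A13 A23 e1 e2 e3
    + TS A12 A13 A23 e1 e2 e3 * TS2 b1 b2 b3 A12 A13 A23 e1 e2 e3
    - (TS A12 A13 A23 (e1*a1) (e2*a2) (e3*a3) * TS A12 A13 A23 (e1*c1) (e2*c2) (e3*c3)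
       + TS A12 A13 A23 (e1*c1) (e2*c2) (e3*c3) * TS A12 A13 A23 (e1*a1) (e2*a2) (e3*a3)
       - 2 * (TS A12 A13 A23 e1 e2 e3 * TS A12 A13 A23 e1 e2 e3)) = 0"
  unfolding TS_def TS1_def TS2_def by (rule bil_zero[OF H1 H2 H3 U1 U2 U3 W12 W13 W23 C])

lemma dTS:
  fixes k1 k2 k3 b1 b2 b3 A12 A13 A23 :: real
  shows "((\<lambda>s. TS A12 A13 A23 (exp(k1+b1 * s)) (exp(k2+b2 * s)) (exp(k3+b3 * s))) has_real_derivative
     TS1 b1 b2 b3 A12 A13 A23 (exp(k1+b1 * s)) (exp(k2+b2 * s)) (exp(k3+b3 * s))) (at s)"
  unfolding TS_def TS1_def
  by (rule derivative_eq_intros refl | simp)+ (simp add: algebra_simps)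

lemma dTS1:
  fixes k1 k2 k3 b1 b2 b3 A12 A13 A23 :: real
  shows "((\<lambda>s. TS1 b1 b2 b3 A12 A13 A23 (exp(k1+b1 * s)) (exp(k2+b2 * s)) (exp(k3+b3 * s))) has_real_derivative
     TS2 b1 b2 b3 A12 A13 A23 (exp(k1+b1 * s)) (exp(k2+b2 * s)) (exp(k3+b3 * s))) (at s)"
  unfolding TS1_def TS2_def
  by (rule derivative_eq_intros refl | simp)+ (simp add: algebra_simps power2_eq_square)

lemma pairset: "{(i,j). 1 \<le> i \<and> i < j \<and> j \<le> (3::nat)} = {(1,2),(1,3),(2,3)}"
  by auto

lemma set13: "{1..3::nat} = {1,2,3}" by auto

lemma ts_eq: "three_soliton eps \<alpha> \<beta> \<eta> y s = TS (Acoef eps \<alpha> \<beta> \<eta> 1 2) (Acoef eps \<alpha> \<beta> \<eta> 1 3) (Acoef eps \<alpha> \<beta> \<eta> 2 3)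
   (exp (theta \<alpha> \<beta> \<eta> 1 y s)) (exp (theta \<alpha> \<beta> \<eta> 2 y s)) (exp (theta \<alpha> \<beta> \<eta> 3 y s))"
  unfolding three_soliton_def TS_def pairset set13 by (simp add: exp_add algebra_simps)


lemma Pp: "Ppoly eps (padd (pv \<alpha> \<beta> \<eta> i) (pv \<alpha> \<beta> \<eta> j)) = (\<beta> i + \<beta> j)^2 - (exp(\<alpha> i*eps)*exp(\<alpha> j*eps) + exp(-(\<alpha> i*eps))*exp(-(\<alpha> j*eps)) - 2)"
  by (simp add: Ppoly_def padd_def pv_def distrib_right exp_add[symmetric])

lemma Pm: "Ppoly eps (psub (pv \<alpha> \<beta> \<eta> i) (pv \<alpha> \<beta> \<eta> j)) = (\<beta> i - \<beta> j)^2 - (exp(\<alpha> i*eps)*exp(-(\<alpha> j*eps)) + exp(-(\<alpha> i*eps))*exp(\<alpha> j*eps) - 2)"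
  by (simp add: Ppoly_def psub_def pv_def left_diff_distrib exp_add[symmetric])

lemma Wlem:
  assumes "Ppoly eps (padd (pv \<alpha> \<beta> \<eta> i) (pv \<alpha> \<beta> \<eta> j)) \<noteq> 0"
  shows "Acoef eps \<alpha> \<beta> \<eta> i j * ((\<beta> i + \<beta> j)^2 - (exp(\<alpha> i*eps)*exp(\<alpha> j*eps) + exp(-(\<alpha> i*eps))*exp(-(\<alpha> j*eps)) - 2))
     + ((\<beta> i - \<beta> j)^2 - (exp(\<alpha> i*eps)*exp(-(\<alpha> j*eps)) + exp(-(\<alpha> i*eps))*exp(\<alpha> j*eps) - 2)) = 0"
  using assms unfolding Acoef_def Pp Pm by (simp add: field_simps)

theorem mainTheorem4:
  fixes eps :: real and \<alpha> \<beta> \<eta> :: "nat \<Rightarrow> real"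
  assumes disp: "\<And>i. i \<in> {1..3} \<Longrightarrow> (\<beta> i)^2 = exp (\<alpha> i * eps) + exp (- (\<alpha> i * eps)) - 2"
    and nz: "\<And>i j. 1 \<le> i \<Longrightarrow> i < j \<Longrightarrow> j \<le> 3 \<Longrightarrow>
               Ppoly eps (padd (pv \<alpha> \<beta> \<eta> i) (pv \<alpha> \<beta> \<eta> j)) \<noteq> 0"
  shows "\<forall>x t. x \<noteq> 0 \<and> 1 - eps * x \<noteq> 0 \<and> 1 + eps * x \<noteq> 0 \<longrightarrow>
           qToda_bilinear eps (three_soliton eps \<alpha> \<beta> \<eta>) x t = 0"
proof (intro allI impI)
  fix x t :: real
  assume xt: "x \<noteq> 0 \<and> 1 - eps * x \<noteq> 0 \<and> 1 + eps * x \<noteq> 0"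
  hence x0: "x \<noteq> 0" and xm: "1 - eps*x \<noteq> 0" and xp: "1 + eps*x \<noteq> 0" by auto
  define A12 where "A12 = Acoef eps \<alpha> \<beta> \<eta> 1 2"
  define A13 where "A13 = Acoef eps \<alpha> \<beta> \<eta> 1 3"
  define A23 where "A23 = Acoef eps \<alpha> \<beta> \<eta> 2 3"
  define k where "k i = - \<alpha> i / x + \<eta> i" for i
  have th: "\<And>i s. theta \<alpha> \<beta> \<eta> i x s = k i + \<beta> i * s" by (simp add: theta_def k_def)
  have thM: "\<And>i. theta \<alpha> \<beta> \<eta> i (x/(1-eps*x)) t = (k i + \<beta> i * t) + \<alpha> i * eps"
    using x0 xm by (simp add: theta_def k_def field_simps)
  have thp: "\<And>i. theta \<alpha> \<beta> \<eta> i (x/(1+eps*x)) t = (k i + \<beta> i * t) + (- (\<alpha> i * eps))"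
    using x0 xp by (simp add: theta_def k_def field_simps)
  have g: "(\<lambda>s. three_soliton eps \<alpha> \<beta> \<eta> x s) = (\<lambda>s. TS A12 A13 A23 (exp(k 1 + \<beta> 1 * s)) (exp(k 2 + \<beta> 2 * s)) (exp(k 3 + \<beta> 3 * s)))"
    by (simp add: ts_eq th A12_def A13_def A23_def)
  have d1: "deriv (\<lambda>s. three_soliton eps \<alpha> \<beta> \<eta> x s) = (\<lambda>s. TS1 (\<beta> 1) (\<beta> 2) (\<beta> 3) A12 A13 A23 (exp(k 1 + \<beta> 1 * s)) (exp(k 2 + \<beta> 2 * s)) (exp(k 3 + \<beta> 3 * s)))"
    unfolding g by (rule ext, rule DERIV_imp_deriv, rule dTS)
  have d2: "deriv (\<lambda>s. TS1 (\<beta> 1) (\<beta> 2) (\<beta> 3) A12 A13 A23 (exp(k 1 + \<beta> 1 * s)) (exp(k 2 + \<beta> 2 * s)) (exp(k 3 + \<beta> 3 * s)))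
       = (\<lambda>s. TS2 (\<beta> 1) (\<beta> 2) (\<beta> 3) A12 A13 A23 (exp(k 1 + \<beta> 1 * s)) (exp(k 2 + \<beta> 2 * s)) (exp(k 3 + \<beta> 3 * s)))"
    by (rule ext, rule DERIV_imp_deriv, rule dTS1)
  have s0: "three_soliton eps \<alpha> \<beta> \<eta> x t = TS A12 A13 A23 (exp(k 1 + \<beta> 1*t)) (exp(k 2 + \<beta> 2*t)) (exp(k 3 + \<beta> 3*t))"
    by (simp add: ts_eq th A12_def A13_def A23_def)
  have sm: "three_soliton eps \<alpha> \<beta> \<eta> (x/(1-eps*x)) t = TS A12 A13 A23
      (exp(k 1 + \<beta> 1*t) * exp(\<alpha> 1 * eps)) (exp(k 2 + \<beta> 2*t) * exp(\<alpha> 2 * eps)) (exp(k 3 + \<beta> 3*t) * exp(\<alpha> 3 * eps))"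
    unfolding ts_eq thM exp_add A12_def A13_def A23_def ..
  have sp: "three_soliton eps \<alpha> \<beta> \<eta> (x/(1+eps*x)) t = TS A12 A13 A23
      (exp(k 1 + \<beta> 1*t) * exp(-(\<alpha> 1 * eps))) (exp(k 2 + \<beta> 2*t) * exp(-(\<alpha> 2 * eps))) (exp(k 3 + \<beta> 3*t) * exp(-(\<alpha> 3 * eps)))"
    unfolding ts_eq thp exp_add A12_def A13_def A23_def ..
  have D: "\<And>i. i \<in> {1..3} \<Longrightarrow> (\<beta> i)^2 = exp (\<alpha> i * eps) + exp (- (\<alpha> i * eps)) - 2" by (rule disp)
  have U: "\<And>u::real. exp u * exp (- u) = 1" by (simp add: exp_add[symmetric])
  have W12: "A12 * ((\<beta> 1 + \<beta> 2)^2 - (exp(\<alpha> 1*eps)*exp(\<alpha> 2*eps) + exp(-(\<alpha> 1*eps))*exp(-(\<alpha> 2*eps)) - 2))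
     + ((\<beta> 1 - \<beta> 2)^2 - (exp(\<alpha> 1*eps)*exp(-(\<alpha> 2*eps)) + exp(-(\<alpha> 1*eps))*exp(\<alpha> 2*eps) - 2)) = 0"
    unfolding A12_def by (rule Wlem, rule nz) auto
  have W13: "A13 * ((\<beta> 1 + \<beta> 3)^2 - (exp(\<alpha> 1*eps)*exp(\<alpha> 3*eps) + exp(-(\<alpha> 1*eps))*exp(-(\<alpha> 3*eps)) - 2))
     + ((\<beta> 1 - \<beta> 3)^2 - (exp(\<alpha> 1*eps)*exp(-(\<alpha> 3*eps)) + exp(-(\<alpha> 1*eps))*exp(\<alpha> 3*eps) - 2)) = 0"
    unfolding A13_def by (rule Wlem, rule nz) auto
  have W23: "A23 * ((\<beta> 2 + \<beta> 3)^2 - (exp(\<alpha> 2*eps)*exp(\<alpha> 3*eps) + exp(-(\<alpha> 2*eps))*exp(-(\<alpha> 3*eps)) - 2))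
     + ((\<beta> 2 - \<beta> 3)^2 - (exp(\<alpha> 2*eps)*exp(-(\<alpha> 3*eps)) + exp(-(\<alpha> 2*eps))*exp(\<alpha> 3*eps) - 2)) = 0"
    unfolding A23_def by (rule Wlem, rule nz) auto
  have Q12: "(\<beta> 1 + \<beta> 2)^2 - (exp(\<alpha> 1*eps)*exp(\<alpha> 2*eps) + exp(-(\<alpha> 1*eps))*exp(-(\<alpha> 2*eps)) - 2) \<noteq> 0"
    using nz[of 1 2] unfolding Pp by simp
  have Q13: "(\<beta> 1 + \<beta> 3)^2 - (exp(\<alpha> 1*eps)*exp(\<alpha> 3*eps) + exp(-(\<alpha> 1*eps))*exp(-(\<alpha> 3*eps)) - 2) \<noteq> 0"
    using nz[of 1 3] unfolding Pp by simp
  have Q23: "(\<beta> 2 + \<beta> 3)^2 - (exp(\<alpha> 2*eps)*exp(\<alpha> 3*eps) + exp(-(\<alpha> 2*eps))*exp(-(\<alpha> 3*eps)) - 2) \<noteq> 0"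
    using nz[of 2 3] unfolding Pp by simp
  have H1: "(\<beta> 1)^2 = exp (\<alpha> 1 * eps) + exp (- (\<alpha> 1 * eps)) - 2" by (rule D) auto
  have H2: "(\<beta> 2)^2 = exp (\<alpha> 2 * eps) + exp (- (\<alpha> 2 * eps)) - 2" by (rule D) auto
  have H3: "(\<beta> 3)^2 = exp (\<alpha> 3 * eps) + exp (- (\<alpha> 3 * eps)) - 2" by (rule D) auto
  note C = C_abs[OF exp_gt_zero exp_gt_zero exp_gt_zero H1 H2 H3 U U U W12 W13 W23 Q12 Q13 Q23]
  show "qToda_bilinear eps (three_soliton eps \<alpha> \<beta> \<eta>) x t = 0"
    unfolding qToda_bilinear_def hirota_Dt2_def qshift_plus_def qshift_minus_def d1 d2
    unfolding s0 sp sm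
    by (rule bil_TS[OF H1 H2 H3 U U U W12 W13 W23 C])
qed

end
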